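(* Let $G$ be a bipartite graph with color classes $E$ and $V$, and let the splitting $V\cup E=S\cup T$ induce a non-empty directed cut $C$ of $G$. Then the root polytope $Q_G$ has a supporting hyperplane which contains none of the vertices of $Q_G$ corresponding to edges in $C$ but contains all other vertices of $Q_G$.
   Context: Bipartite graphs have no multiple edges. $Q_G\subset\mathbf R^E\oplus\mathbf R^V$ is the convex hull of the points $\mathbf i_{\{e\}}+\mathbf i_{\{v\}}$ over edges $ev$ of $G$ ($\mathbf i$ = indicator vector); the vertex $\mathbf i_{\{e\}}+\mathbf i_{\{v\}}$ corresponds to the edge $ev$. The cut induced by a splitting $V\cup E=S\cup T$ into disjoint sets is the set of edges between $S$ and $T$; it is directed if $G$ has no edges between $E\cap S$ and $V\cap T$. *)

theory Defs
  imports "HOL-Analysis.Analysis"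
begin

text \<open>A bipartite graph with colour classes E and V on a finite vertex type 'a
  (E and V partition UNIV, so real^'a is R^E (+) R^V); its edge set is a set
  of pairs (e,v) with e in E and v in V (no multiple edges).\<close>

definition bipartite_graph :: "'a::finite set \<Rightarrow> 'a set \<Rightarrow> ('a \<times> 'a) set \<Rightarrow> bool" where
  "bipartite_graph E V G \<longleftrightarrow> E \<inter> V = {} \<and> E \<union> V = UNIV \<and> G \<subseteq> E \<times> V"

definition ind :: "'a::finite set \<Rightarrow> real ^ 'a" where
  "ind A = (\<chi> i. if i \<in> A then 1 else 0)"

definition root_vertex :: "'a::finite \<times> 'a \<Rightarrow> real ^ 'a" where
  "root_vertex ev = ind {fst ev} + ind {snd ev}"

definition root_polytope :: "('a::finite \<times> 'a) set \<Rightarrow> (real ^ 'a) set" where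
  "root_polytope G = convex hull (root_vertex ` G)"

definition cut_of :: "('a \<times> 'a) set \<Rightarrow> 'a set \<Rightarrow> 'a set \<Rightarrow> ('a \<times> 'a) set" where
  "cut_of G S T = {(e, v) \<in> G. (e \<in> S \<and> v \<in> T) \<or> (e \<in> T \<and> v \<in> S)}"

definition is_splitting :: "'a set \<Rightarrow> 'a set \<Rightarrow> 'a set \<Rightarrow> 'a set \<Rightarrow> bool" where
  "is_splitting E V S T \<longleftrightarrow> S \<union> T = E \<union> V \<and> S \<inter> T = {}"

definition directed_splitting :: "'a set \<Rightarrow> 'a set \<Rightarrow> ('a \<times> 'a) set \<Rightarrow> 'a set \<Rightarrow> 'a set \<Rightarrow> bool" where
  "directed_splitting E V G S T \<longleftrightarrow> \<not> (\<exists>(e, v) \<in> G. e \<in> E \<inter> S \<and> v \<in> V \<inter> T)"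

definition supporting_hyperplane :: "real ^ 'a \<Rightarrow> real \<Rightarrow> (real ^ 'a) set \<Rightarrow> bool" where
  "supporting_hyperplane a b P \<longleftrightarrow> a \<noteq> 0 \<and> (\<forall>x \<in> P. a \<bullet> x \<le> b)"

end

theory Submission
  imports Defs
begin

lemma inner_ind1: "(a::real^'a::finite) \<bullet> ind {i} = a $ i"
proof -
  have "a \<bullet> ind {i} = (\<Sum>j\<in>UNIV. a $ j * (if j \<in> {i} then 1 else 0))"
    by (simp add: inner_vec_def ind_def)
  also have "\<dots> = a $ i" by (simp add: if_distrib cong: if_cong)
  finally show ?thesis .
qed

theorem lemma3p5:
  fixes E V S T :: "'a::finite set" and G :: "('a \<times> 'a) set"
  assumes "bipartite_graph E V G"
    and "is_splitting E V S T"
    and "directed_splitting E V G S T"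
    and "cut_of G S T \<noteq> {}"
  shows "\<exists>a b. supporting_hyperplane a b (root_polytope G) \<and>
           (\<forall>ev \<in> cut_of G S T. a \<bullet> root_vertex ev \<noteq> b) \<and>
           (\<forall>ev \<in> G - cut_of G S T. a \<bullet> root_vertex ev = b)"
proof -
  define a :: "real^'a" where "a = (\<chi> i. if i \<in> E \<inter> S then 1 else if i \<in> V \<inter> S then -1 else 0)"
  have rv: "a \<bullet> root_vertex ev = a $ fst ev + a $ snd ev" for ev
    by (simp add: root_vertex_def inner_add_right inner_ind1)
  have EV: "E \<inter> V = {}" "E \<union> V = UNIV" "G \<subseteq> E \<times> V" using assms(1) by (auto simp: bipartite_graph_def)
  have ST: "S \<union> T = UNIV" "S \<inter> T = {}" using assms(2) EV by (auto simp: is_splitting_def)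
  have dir: "\<And>e v. (e,v) \<in> G \<Longrightarrow> e \<in> S \<Longrightarrow> v \<in> S"
    using assms(3) EV ST unfolding directed_splitting_def by blast
  have val: "a \<bullet> root_vertex (e,v) = (if (e,v) \<in> cut_of G S T then -1 else 0)" if "(e,v) \<in> G" for e v
  proof -
    have "e \<in> E" "v \<in> V" using that EV by auto
    then have "e \<notin> V" "v \<notin> E" using EV by auto
    then show ?thesis unfolding rv fst_conv snd_conv using dir[OF that] ST \<open>e \<in> E\<close> \<open>v \<in> V\<close> that
      by (auto simp: a_def cut_of_def)
  qed
  obtain e v where c: "(e,v) \<in> cut_of G S T" using assms(4) by auto
  have "(e,v) \<in> G" using c by (auto simp: cut_of_def)
  have "a \<noteq> 0"
  proof
    assume "a = 0"
    then show False using val[OF \<open>(e,v) \<in> G\<close>] c by simp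
  qed
  moreover have "\<forall>x \<in> root_polytope G. a \<bullet> x \<le> 0"
  proof -
    have "root_vertex ` G \<subseteq> {x. a \<bullet> x \<le> 0}" using val by force
    then have "root_polytope G \<subseteq> {x. a \<bullet> x \<le> 0}"
      unfolding root_polytope_def by (rule hull_minimal) (simp add: convex_halfspace_le)
    then show ?thesis by auto
  qed
  ultimately show ?thesis
    apply (rule_tac x=a in exI, rule_tac x=0 in exI)
    apply (auto simp: supporting_hyperplane_def)
    using val apply (force simp: cut_of_def)
    using val by force
qed

end
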